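(* Let $G$ be a finite group and $H$ a normal subgroup of $G$. Then the extended subgroup sum graph $\Gamma^+_{G,H}$ admits a total perfect code if and only if $|G|$ is even and $|H|=2$.
   Context: For a normal subgroup $H$ of a finite group $G$, the extended subgroup sum graph $\Gamma^+_{G,H}$ is the simple undirected graph with vertex set $G$ in which distinct vertices $x,y$ are adjacent if and only if $xy\in H$. A total perfect code in a graph is a set $C$ of vertices such that every vertex of the graph (whether in $C$ or not) has exactly one neighbour in $C$. *)

theory Defs
  imports "HOL-Algebra.Algebra"
begin

definition ext_subgroup_sum_adj :: "('a, 'b) monoid_scheme \<Rightarrow> 'a set \<Rightarrow> 'a \<Rightarrow> 'a \<Rightarrow> bool" where
  "ext_subgroup_sum_adj G H x y \<longleftrightarrow>
     x \<in> carrier G \<and> y \<in> carrier G \<and> x \<noteq> y \<and> x \<otimes>\<^bsub>G\<^esub> y \<in> H"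

definition total_perfect_code :: "'a set \<Rightarrow> ('a \<Rightarrow> 'a \<Rightarrow> bool) \<Rightarrow> 'a set \<Rightarrow> bool" where
  "total_perfect_code V E C \<longleftrightarrow> C \<subseteq> V \<and> (\<forall>v\<in>V. \<exists>!c. c \<in> C \<and> E v c)"

end

theory Submission
  imports Defs
begin

lemma fwd_card:
  fixes G :: "('a, 'b) monoid_scheme" (structure) and H :: "'a set"
  assumes gr: "group G" and sg: "subgroup H G"
    and C: "total_perfect_code (carrier G) (ext_subgroup_sum_adj G H) C"
  shows "card H = 2"
proof -
  interpret group G by (rule gr)
  have HC: "H \<subseteq> carrier G" using sg subgroup.subset by blast
  have key: "\<And>w c. w \<in> H \<Longrightarrow> ext_subgroup_sum_adj G H w c \<longleftrightarrow> c \<in> H \<and> c \<noteq> w"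
  proof -
    fix w c assume w: "w \<in> H"
    have wc: "w \<in> carrier G" using w HC by blast
    show "ext_subgroup_sum_adj G H w c \<longleftrightarrow> c \<in> H \<and> c \<noteq> w"
    proof
      assume a: "ext_subgroup_sum_adj G H w c"
      hence c: "c \<in> carrier G" and wcH: "w \<otimes> c \<in> H" and ne: "w \<noteq> c"
        unfolding ext_subgroup_sum_adj_def by auto
      have "inv w \<otimes> (w \<otimes> c) \<in> H"
        by (intro subgroup.m_closed[OF sg] subgroup.m_inv_closed[OF sg] w wcH)
      moreover have "inv w \<otimes> (w \<otimes> c) = c" using wc c by (simp add: m_assoc[symmetric])
      ultimately show "c \<in> H \<and> c \<noteq> w" using ne by auto
    next
      assume "c \<in> H \<and> c \<noteq> w"
      thus "ext_subgroup_sum_adj G H w c" unfolding ext_subgroup_sum_adj_def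
        using w HC subgroup.m_closed[OF sg, of w c] by auto
    qed
  qed
  have U: "\<And>w. w \<in> H \<Longrightarrow> \<exists>!c. c \<in> C \<and> c \<in> H \<and> c \<noteq> w"
  proof -
    fix w assume w: "w \<in> H"
    hence "\<exists>!c. c \<in> C \<and> ext_subgroup_sum_adj G H w c"
      using C HC unfolding total_perfect_code_def by blast
    thus "\<exists>!c. c \<in> C \<and> c \<in> H \<and> c \<noteq> w" using key[OF w] by simp
  qed
  have oneH: "\<one> \<in> H" using sg subgroup.one_closed by blast
  obtain c0 where c0: "c0 \<in> C" "c0 \<in> H" "c0 \<noteq> \<one>" using U[OF oneH] by blast
  obtain c1 where c1: "c1 \<in> C" "c1 \<in> H" "c1 \<noteq> c0" using U[OF c0(2)] by blast
  have "H = {c0, c1}"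
  proof
    show "{c0, c1} \<subseteq> H" using c0 c1 by auto
    show "H \<subseteq> {c0, c1}"
    proof
      fix w assume w: "w \<in> H"
      show "w \<in> {c0, c1}"
      proof (rule ccontr)
        assume "w \<notin> {c0, c1}"
        hence "c0 \<noteq> w" "c1 \<noteq> w" by auto
        moreover have "\<forall>a b. a \<in> C \<and> a \<in> H \<and> a \<noteq> w \<longrightarrow> b \<in> C \<and> b \<in> H \<and> b \<noteq> w \<longrightarrow> a = b"
          using U[OF w] by (metis (no_types, lifting))
        ultimately show False using c0 c1 by blast
      qed
    qed
  qed
  thus ?thesis using c1 by simp
qed

lemma bwd:
  fixes G :: "('a, 'b) monoid_scheme" (structure) and H :: "'a set"
  assumes gr: "group G" and nH: "H \<lhd> G" and c2: "card H = 2"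
  shows "\<exists>C. total_perfect_code (carrier G) (ext_subgroup_sum_adj G H) C"
proof -
  interpret group G by (rule gr)
  have sg: "subgroup H G" using nH normal_imp_subgroup by blast
  have HC: "H \<subseteq> carrier G" using sg subgroup.subset by blast
  have oneH: "\<one> \<in> H" using sg subgroup.one_closed by blast
  obtain h where Hh: "H = {\<one>, h}" and h1: "h \<noteq> \<one>"
  proof -
    obtain x y where "H = {x, y}" "x \<noteq> y" using c2 card_2_iff by metis
    thus ?thesis using oneH that by auto
  qed
  have hc: "h \<in> carrier G" using Hh HC by auto
  have hh: "h \<otimes> h = \<one>"
  proof -
    have "h \<otimes> h \<in> H" using Hh subgroup.m_closed[OF sg, of h h] by auto
    moreover have "h \<otimes> h \<noteq> h" using hc h1 by (metis r_one l_cancel one_closed)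
    ultimately show ?thesis using Hh by auto
  qed
  have central: "\<And>x. x \<in> carrier G \<Longrightarrow> x \<otimes> h = h \<otimes> x"
  proof -
    fix x assume x: "x \<in> carrier G"
    have "x \<otimes> h \<otimes> inv x \<in> H" using normal.inv_op_closed2[OF nH x] Hh by auto
    moreover have "x \<otimes> h \<otimes> inv x \<noteq> \<one>"
    proof
      assume "x \<otimes> h \<otimes> inv x = \<one>"
      hence "x \<otimes> h = x" using x hc by (metis inv_closed inv_inv m_closed inv_equality)
      hence "h = \<one>" using x hc by (metis r_one l_cancel one_closed)
      thus False using h1 by simp
    qed
    ultimately have "x \<otimes> h \<otimes> inv x = h" using Hh by auto
    hence "x \<otimes> h \<otimes> inv x \<otimes> x = h \<otimes> x" by simp
    thus "x \<otimes> h = h \<otimes> x" using x hc by (simp add: m_assoc)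
  qed
  define S where "S x = {x, x \<otimes> h}" for x
  define ch where "ch T = (SOME y. y \<in> T)" for T :: "'a set"
  define C where "C = {x \<in> carrier G. x \<otimes> x \<in> H \<or> x = ch (S x)}"
  have Sxh: "\<And>x. x \<in> carrier G \<Longrightarrow> S (x \<otimes> h) = S x"
    unfolding S_def using hc hh by (auto simp: m_assoc)
  have xneq: "\<And>x. x \<in> carrier G \<Longrightarrow> x \<otimes> h \<noteq> x"
    using hc h1 by (metis r_one l_cancel one_closed)
  have chS: "\<And>x. ch (S x) \<in> S x" unfolding ch_def S_def by (metis insertI1 someI)
  have sq_h: "\<And>x. x \<in> carrier G \<Longrightarrow> (x \<otimes> h) \<otimes> (x \<otimes> h) = x \<otimes> x"
  proof -
    fix x assume x: "x \<in> carrier G"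
    have "(x \<otimes> h) \<otimes> (x \<otimes> h) = x \<otimes> (h \<otimes> x) \<otimes> h" using x hc by (simp add: m_assoc)
    also have "\<dots> = x \<otimes> (x \<otimes> h) \<otimes> h" using central[OF x] by simp
    also have "\<dots> = x \<otimes> x \<otimes> (h \<otimes> h)" using x hc by (simp add: m_assoc)
    finally show "(x \<otimes> h) \<otimes> (x \<otimes> h) = x \<otimes> x" using hh x by simp
  qed
  have adj: "\<And>v c. v \<in> carrier G \<Longrightarrow> ext_subgroup_sum_adj G H v c \<longleftrightarrow>
       c \<in> {inv v, inv v \<otimes> h} \<and> c \<noteq> v"
  proof -
    fix v c assume v: "v \<in> carrier G"
    show "ext_subgroup_sum_adj G H v c \<longleftrightarrow> c \<in> {inv v, inv v \<otimes> h} \<and> c \<noteq> v"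
    proof
      assume "ext_subgroup_sum_adj G H v c"
      hence c: "c \<in> carrier G" and "v \<otimes> c \<in> H" "v \<noteq> c" unfolding ext_subgroup_sum_adj_def by auto
      hence "v \<otimes> c = \<one> \<or> v \<otimes> c = h" using Hh by auto
      moreover have "v \<otimes> c = \<one> \<Longrightarrow> c = inv v" using v c by (metis inv_equality l_inv inv_closed l_cancel r_inv)
      moreover have "v \<otimes> c = h \<Longrightarrow> c = inv v \<otimes> h" using v c hc
        by (metis inv_closed l_inv l_one m_assoc)
      ultimately show "c \<in> {inv v, inv v \<otimes> h} \<and> c \<noteq> v" using \<open>v \<noteq> c\<close> by auto
    next
      assume a: "c \<in> {inv v, inv v \<otimes> h} \<and> c \<noteq> v"
      hence "c \<in> carrier G" using v hc by auto
      moreover have "v \<otimes> c \<in> H" using a v hc Hh by (auto simp: m_assoc[symmetric])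
      ultimately show "ext_subgroup_sum_adj G H v c" using a v unfolding ext_subgroup_sum_adj_def by auto
    qed
  qed
  have "total_perfect_code (carrier G) (ext_subgroup_sum_adj G H) C"
    unfolding total_perfect_code_def
  proof (intro conjI ballI)
    show "C \<subseteq> carrier G" unfolding C_def by auto
    fix v assume v: "v \<in> carrier G"
    let ?u = "inv v"
    have u: "?u \<in> carrier G" using v by simp
    show "\<exists>!c. c \<in> C \<and> ext_subgroup_sum_adj G H v c"
    proof (cases "v \<otimes> v \<in> H")
      case True
      have eq: "{?u, ?u \<otimes> h} = {v, v \<otimes> h}"
      proof -
        have "v \<otimes> v = \<one> \<or> v \<otimes> v = h" using True Hh by auto
        thus ?thesis
        proof
          assume "v \<otimes> v = \<one>"
          hence "?u = v" using v by (metis inv_equality)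
          thus ?thesis by simp
        next
          assume vv: "v \<otimes> v = h"
          have "v \<otimes> (v \<otimes> h) = \<one>" using vv v hc hh by (simp add: m_assoc[symmetric])
          hence "?u = v \<otimes> h" using v hc
            by (metis inv_equality m_closed comm_group_def inv_comm)
          moreover have "?u \<otimes> h = v" using calculation v hc hh by (simp add: m_assoc)
          ultimately show ?thesis by auto
        qed
      qed
      have vhC: "v \<otimes> h \<in> C" unfolding C_def using sq_h[OF v] True v hc by auto
      show ?thesis
      proof (rule ex1I[of _ "v \<otimes> h"])
        show "v \<otimes> h \<in> C \<and> ext_subgroup_sum_adj G H v (v \<otimes> h)"
          using vhC adj[OF v] eq xneq[OF v] by auto
        fix c assume "c \<in> C \<and> ext_subgroup_sum_adj G H v c"
        thus "c = v \<otimes> h" using adj[OF v] eq by auto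
      qed
    next
      case False
      have nv1: "?u \<noteq> v"
      proof
        assume "?u = v"
        hence "v \<otimes> v = \<one>" using v by (metis r_inv)
        thus False using False oneH by simp
      qed
      have nv2: "?u \<otimes> h \<noteq> v"
      proof
        assume a: "?u \<otimes> h = v"
        have "v \<otimes> v = v \<otimes> (?u \<otimes> h)" using a by simp
        also have "\<dots> = h" using v hc by (simp add: m_assoc[symmetric])
        finally show False using False Hh by simp
      qed
      have uu: "?u \<otimes> ?u \<notin> H"
      proof
        assume "?u \<otimes> ?u \<in> H"
        hence "inv (?u \<otimes> ?u) \<in> H" using subgroup.m_inv_closed[OF sg] by auto
        moreover have "inv (?u \<otimes> ?u) = v \<otimes> v" using v by (simp add: inv_mult_group)
        ultimately show False using False by simp
      qed
      have uh: "(?u \<otimes> h) \<otimes> (?u \<otimes> h) \<notin> H" using sq_h[OF u] uu by simp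
      have inC: "\<And>c. c \<in> {?u, ?u \<otimes> h} \<Longrightarrow> c \<in> C \<longleftrightarrow> c = ch (S ?u)"
        unfolding C_def using uu uh u hc Sxh[OF u] by auto
      have chin: "ch (S ?u) \<in> {?u, ?u \<otimes> h}" using chS unfolding S_def by auto
      show ?thesis
      proof (rule ex1I[of _ "ch (S ?u)"])
        have c1: "ch (S ?u) \<in> C" using inC[OF chin] by simp
        have c2: "ch (S ?u) \<noteq> v" using chin nv1 nv2 by auto
        show "ch (S ?u) \<in> C \<and> ext_subgroup_sum_adj G H v (ch (S ?u))"
          using c1 c2 chin adj[OF v, of "ch (S ?u)"] by simp
        fix c assume a: "c \<in> C \<and> ext_subgroup_sum_adj G H v c"
        hence "c \<in> {?u, ?u \<otimes> h}" using adj[OF v, of c] by simp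
        thus "c = ch (S ?u)" using inC a by blast
      qed
    qed
  qed
  thus ?thesis by blast
qed

theorem theorem6p3:
  fixes G :: "('a, 'b) monoid_scheme" and H :: "'a set"
  assumes "group G" and "finite (carrier G)" and "H \<lhd> G"
  shows "(\<exists>C. total_perfect_code (carrier G) (ext_subgroup_sum_adj G H) C)
           \<longleftrightarrow> even (order G) \<and> card H = 2"
proof
  have sg: "subgroup H G" using assms(3) normal_imp_subgroup by blast
  assume "\<exists>C. total_perfect_code (carrier G) (ext_subgroup_sum_adj G H) C"
  then obtain C where C: "total_perfect_code (carrier G) (ext_subgroup_sum_adj G H) C" by blast
  have c2: "card H = 2" using fwd_card[OF assms(1) sg C] .
  have "card (rcosets\<^bsub>G\<^esub> H) * card H = order G" using group.lagrange[OF assms(1) sg] .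
  hence "even (order G)" using c2 by (metis dvd_triv_right)
  thus "even (order G) \<and> card H = 2" using c2 by simp
next
  assume "even (order G) \<and> card H = 2"
  thus "\<exists>C. total_perfect_code (carrier G) (ext_subgroup_sum_adj G H) C"
    using bwd[OF assms(1) assms(3)] by blast
qed

end
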